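(* Let $X=\ell_p$ for some $1\le p<\infty$, or $X=c_0$, considered as a Banach algebra under coordinatewise multiplication, and let $\lambda\in\mathbb C$ with $|\lambda|>1$. Let $\lambda B$ be the operator $\lambda B(x(1),x(2),x(3),\ldots)=(\lambda x(2),\lambda x(3),\lambda x(4),\ldots)$ on $X$. If $x$ is a frequently hypercyclic vector for $\lambda B$, then there exists a natural number $M$ such that the coordinatewise power $x^m$ is not a hypercyclic vector for $\lambda B$ for any $m\geq M$.
   Context: For an operator $T$ on $X$, a vector $x$ is hypercyclic if $\{x,Tx,T^2x,\ldots\}$ is dense in $X$; it is frequently hypercyclic if for every non-empty open $U\subset X$ the set $\{n\in\mathbb N_0: T^nx\in U\}$ has positive lower density, where the lower density of $A\subset\mathbb N_0$ is $\liminf_{N\to\infty}\frac{\mathrm{card}\{0\le n\le N:n\in A\}}{N+1}$. *)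

theory Defs
  imports "HOL-Analysis.Analysis" "HOL-Library.Liminf_Limsup"
begin

text \<open>Sequence spaces over the complex numbers, modelled as subsets of nat => complex
  (index 0 corresponds to the paper's coordinate 1).\<close>

definition ell :: "real \<Rightarrow> (nat \<Rightarrow> complex) set" where
  "ell p = {x. summable (\<lambda>n. norm (x n) powr p)}"

definition ell_norm :: "real \<Rightarrow> (nat \<Rightarrow> complex) \<Rightarrow> real" where
  "ell_norm p x = (\<Sum>n. norm (x n) powr p) powr (1 / p)"

definition c_zero :: "(nat \<Rightarrow> complex) set" where
  "c_zero = {x. x \<longlonglongrightarrow> 0}"

definition sup_norm :: "(nat \<Rightarrow> complex) \<Rightarrow> real" where
  "sup_norm x = Sup (range (\<lambda>n. norm (x n)))"

definition open_in_space :: "(nat \<Rightarrow> complex) set \<Rightarrow> ((nat \<Rightarrow> complex) \<Rightarrow> real)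
    \<Rightarrow> (nat \<Rightarrow> complex) set \<Rightarrow> bool" where
  "open_in_space X nrm U \<longleftrightarrow> U \<subseteq> X \<and>
     (\<forall>u\<in>U. \<exists>e>0. {y\<in>X. nrm (y - u) < e} \<subseteq> U)"

definition wshift :: "complex \<Rightarrow> (nat \<Rightarrow> complex) \<Rightarrow> (nat \<Rightarrow> complex)" where
  "wshift l x = (\<lambda>n. l * x (Suc n))"

definition lower_density :: "nat set \<Rightarrow> ereal" where
  "lower_density A = liminf (\<lambda>N. ereal (real (card {n. n \<le> N \<and> n \<in> A}) / real (N + 1)))"

definition hypercyclic :: "(nat \<Rightarrow> complex) set \<Rightarrow> ((nat \<Rightarrow> complex) \<Rightarrow> real)
    \<Rightarrow> ((nat \<Rightarrow> complex) \<Rightarrow> (nat \<Rightarrow> complex)) \<Rightarrow> (nat \<Rightarrow> complex) \<Rightarrow> bool" where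
  "hypercyclic X nrm T x \<longleftrightarrow> x \<in> X \<and>
     (\<forall>y\<in>X. \<forall>e>0. \<exists>n. nrm ((T ^^ n) x - y) < e)"

definition freq_hypercyclic :: "(nat \<Rightarrow> complex) set \<Rightarrow> ((nat \<Rightarrow> complex) \<Rightarrow> real)
    \<Rightarrow> ((nat \<Rightarrow> complex) \<Rightarrow> (nat \<Rightarrow> complex)) \<Rightarrow> (nat \<Rightarrow> complex) \<Rightarrow> bool" where
  "freq_hypercyclic X nrm T x \<longleftrightarrow> x \<in> X \<and>
     (\<forall>U. open_in_space X nrm U \<and> U \<noteq> {} \<longrightarrow> lower_density {n. (T ^^ n) x \<in> U} > 0)"

end

theory Submission
  imports Defs
begin

definition spc :: "real \<Rightarrow> (nat \<Rightarrow> complex) set \<Rightarrow> ((nat \<Rightarrow> complex) \<Rightarrow> real) \<Rightarrow> bool" where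
  "spc p X nrm \<longleftrightarrow> (1 \<le> p \<and> X = ell p \<and> nrm = ell_norm p) \<or> (X = c_zero \<and> nrm = sup_norm)"

lemma ell_diff:
  assumes p: "1 \<le> p" and a: "a \<in> ell p" and b: "b \<in> ell p"
  shows "a - b \<in> ell p"
proof -
  have sa: "summable (\<lambda>n. norm (a n) powr p)" and sb: "summable (\<lambda>n. norm (b n) powr p)"
    using a b by (auto simp: ell_def)
  have "summable (\<lambda>n. 2 powr p * (norm (a n) powr p + norm (b n) powr p))"
    using sa sb by (intro summable_mult summable_add)
  moreover have "norm (norm ((a - b) n) powr p) \<le> 2 powr p * (norm (a n) powr p + norm (b n) powr p)" for n
  proof -
    have "norm ((a - b) n) \<le> 2 * max (norm (a n)) (norm (b n))"
      using norm_triangle_ineq4[of "a n" "b n"] by auto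
    hence "norm ((a - b) n) powr p \<le> (2 * max (norm (a n)) (norm (b n))) powr p"
      using p by (intro powr_mono2) auto
    also have "\<dots> = 2 powr p * max (norm (a n)) (norm (b n)) powr p"
      by (simp add: powr_mult)
    also have "max (norm (a n)) (norm (b n)) powr p \<le> norm (a n) powr p + norm (b n) powr p"
      by (cases "norm (a n) \<le> norm (b n)") (auto simp: max_def)
    hence "2 powr p * max (norm (a n)) (norm (b n)) powr p \<le> 2 powr p * (norm (a n) powr p + norm (b n) powr p)"
      by (intro mult_left_mono) auto
    finally show ?thesis by simp
  qed
  ultimately have "summable (\<lambda>n. norm ((a - b) n) powr p)"
    by (rule summable_comparison_test'[where N=0])
  thus ?thesis unfolding ell_def by simp
qed

lemma spc_diff: "spc p X nrm \<Longrightarrow> a \<in> X \<Longrightarrow> b \<in> X \<Longrightarrow> a - b \<in> X"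
  unfolding spc_def using ell_diff tendsto_diff[of a 0 sequentially b 0]
  by (auto simp: c_zero_def fun_diff_def)

lemma spc_coord:
  assumes s: "spc p X nrm" and z: "z \<in> X"
  shows "norm (z k) \<le> nrm z"
  using s unfolding spc_def
proof
  assume h: "1 \<le> p \<and> X = ell p \<and> nrm = ell_norm p"
  hence sm: "summable (\<lambda>n. norm (z n) powr p)" using z by (auto simp: ell_def)
  have "sum (\<lambda>n. norm (z n) powr p) {k} \<le> (\<Sum>n. norm (z n) powr p)"
    by (rule sum_le_suminf[OF sm]) auto
  hence "norm (z k) powr p \<le> (\<Sum>n. norm (z n) powr p)" by simp
  hence "(norm (z k) powr p) powr (1/p) \<le> (\<Sum>n. norm (z n) powr p) powr (1/p)"
    using h by (intro powr_mono2) auto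
  thus ?thesis using h by (simp add: ell_norm_def powr_powr)
next
  assume h: "X = c_zero \<and> nrm = sup_norm"
  hence "z \<longlonglongrightarrow> 0" using z by (simp add: c_zero_def)
  hence "Bseq z" by (rule convergent_imp_Bseq[OF convergentI])
  then obtain K where "\<And>n. norm (z n) \<le> K" by (auto simp: Bseq_def)
  hence "bdd_above (range (\<lambda>n. norm (z n)))" by (intro bdd_aboveI[where M=K]) auto
  thus ?thesis using h by (simp add: sup_norm_def cSup_upper)
qed

lemma spc_shift:
  assumes s: "spc p X nrm" and z: "z \<in> X"
  shows "(\<lambda>k. c * z (k + n)) \<in> X"
  using s unfolding spc_def
proof
  assume h: "1 \<le> p \<and> X = ell p \<and> nrm = ell_norm p"
  hence sm: "summable (\<lambda>k. norm (z k) powr p)" using z by (auto simp: ell_def)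
  hence "summable (\<lambda>k. norm (z (k + n)) powr p)" by (rule summable_ignore_initial_segment)
  hence "summable (\<lambda>k. norm c powr p * norm (z (k + n)) powr p)" by (rule summable_mult)
  thus ?thesis using h by (simp add: ell_def norm_mult powr_mult)
next
  assume h: "X = c_zero \<and> nrm = sup_norm"
  hence "z \<longlonglongrightarrow> 0" using z by (simp add: c_zero_def)
  hence "(\<lambda>k. z (k + n)) \<longlonglongrightarrow> 0" by (rule LIMSEQ_ignore_initial_segment)
  hence "(\<lambda>k. c * z (k + n)) \<longlonglongrightarrow> c * 0" by (intro tendsto_mult tendsto_const)
  thus ?thesis using h by (simp add: c_zero_def)
qed

lemma spc_single:
  assumes s: "spc p X nrm"
  shows "(\<lambda>k. if k = 0 then a else 0) \<in> X"
  using s unfolding spc_def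
proof
  assume h: "1 \<le> p \<and> X = ell p \<and> nrm = ell_norm p"
  have "summable (\<lambda>k. norm (if k = 0 then a else 0) powr p)"
    by (rule summable_finite[of "{0}"]) auto
  thus ?thesis using h by (simp add: ell_def)
next
  assume h: "X = c_zero \<and> nrm = sup_norm"
  have "eventually (\<lambda>k. (if k = 0 then a else 0) = 0) sequentially"
    using eventually_gt_at_top[of 0] by eventually_elim auto
  hence "(\<lambda>k. if k = 0 then a else (0::complex)) \<longlonglongrightarrow> 0"
    by (rule tendsto_eventually)
  thus ?thesis using h by (simp add: c_zero_def)
qed

lemma wshift_iter: "(wshift l ^^ n) z = (\<lambda>k. l ^ n * z (k + n))"
  by (induction n) (auto simp: wshift_def mult.assoc)

lemma density_gap:
  assumes d: "card {n. n \<le> j \<and> n \<in> B} > \<delta> * real (j + 1)" and d0: "\<delta> \<ge> 0"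
  shows "\<exists>n\<in>B. n \<le> j \<and> real n > \<delta> * real (j + 1) - 1"
proof (rule ccontr)
  define t where "t = \<delta> * real (j + 1)"
  have t0: "t \<ge> 0" using d0 by (simp add: t_def)
  assume "\<not> ?thesis"
  hence H: "\<forall>n\<in>B. n \<le> j \<longrightarrow> real n \<le> t - 1" by (auto simp: t_def not_less)
  have sub: "{n. n \<le> j \<and> n \<in> B} \<subseteq> {..< nat \<lfloor>t\<rfloor>}"
  proof
    fix n assume "n \<in> {n. n \<le> j \<and> n \<in> B}"
    hence "real n + 1 \<le> t" using H by auto
    hence "real (n + 1) \<le> t" by simp
    hence "int (n + 1) \<le> \<lfloor>t\<rfloor>" by (simp only: le_floor_iff of_int_of_nat_eq)
    thus "n \<in> {..< nat \<lfloor>t\<rfloor>}" by simp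
  qed
  have "card {n. n \<le> j \<and> n \<in> B} \<le> card {..< nat \<lfloor>t\<rfloor>}"
    by (rule card_mono[OF finite_lessThan sub])
  hence c1: "card {n. n \<le> j \<and> n \<in> B} \<le> nat \<lfloor>t\<rfloor>" by simp
  have "real (nat \<lfloor>t\<rfloor>) \<le> t" using t0 by simp
  hence "real (card {n. n \<le> j \<and> n \<in> B}) \<le> t" using c1
    by (meson of_nat_le_iff order_trans)
  thus False using d by (simp add: t_def)
qed

theorem proposition1p2:
  fixes p :: real and X :: "(nat \<Rightarrow> complex) set" and nrm :: "(nat \<Rightarrow> complex) \<Rightarrow> real"
    and l :: complex and x :: "nat \<Rightarrow> complex"
  assumes space: "(1 \<le> p \<and> X = ell p \<and> nrm = ell_norm p) \<or> (X = c_zero \<and> nrm = sup_norm)"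
    and l: "norm l > 1"
    and fhc: "freq_hypercyclic X nrm (wshift l) x"
  shows "\<exists>M::nat. \<forall>m\<ge>M. \<not> hypercyclic X nrm (wshift l) (\<lambda>n. x n ^ m)"
proof -
  have s: "spc p X nrm" using space by (simp add: spc_def)
  define L where "L = norm l"
  have L1: "L > 1" using l by (simp add: L_def)
  have xX: "x \<in> X" using fhc by (simp add: freq_hypercyclic_def)
  define U where "U = {y\<in>X. \<exists>r<1. \<forall>k. norm (y k) \<le> r}"
  have openU: "open_in_space X nrm U"
    unfolding open_in_space_def
  proof (intro conjI ballI)
    show "U \<subseteq> X" by (auto simp: U_def)
  next
    fix u assume "u \<in> U"
    then obtain r where uX: "u \<in> X" and r: "r < 1" "\<And>k. norm (u k) \<le> r" by (auto simp: U_def)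
    show "\<exists>e>0. {y \<in> X. nrm (y - u) < e} \<subseteq> U"
    proof (intro exI conjI subsetI)
      show "1 - r > 0" using r by simp
    next
      fix y assume "y \<in> {y \<in> X. nrm (y - u) < 1 - r}"
      hence yX: "y \<in> X" and yd: "nrm (y - u) < 1 - r" by auto
      have "norm (y k) \<le> nrm (y - u) + r" for k
      proof -
        have "norm (y k) \<le> norm (y k - u k) + norm (u k)" using norm_triangle_ineq2[of "y k" "u k"] by simp
        also have "norm (y k - u k) \<le> nrm (y - u)"
          using spc_coord[OF s spc_diff[OF s yX uX], of k] by simp
        finally show ?thesis using r(2)[of k] by simp
      qed
      moreover have "nrm (y - u) + r < 1" using yd by simp
      ultimately show "y \<in> U" using yX unfolding U_def by blast
    qed
  qed
  have "(\<lambda>k. if k = 0 then 0 else 0) \<in> X" by (rule spc_single[OF s])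
  hence "(\<lambda>k. 0) \<in> U" unfolding U_def by (auto intro: exI[of _ 0])
  hence "U \<noteq> {}" by auto
  define B where "B = {n. (wshift l ^^ n) x \<in> U}"
  have ldB: "lower_density B > 0"
    using fhc openU \<open>U \<noteq> {}\<close> by (simp add: freq_hypercyclic_def B_def)
  have Bbound: "L ^ n * norm (x (k + n)) < 1" if "n \<in> B" for n k
  proof -
    from that obtain r where r: "r < 1" "\<And>k. norm ((wshift l ^^ n) x k) \<le> r"
      by (auto simp: B_def U_def)
    have "norm ((wshift l ^^ n) x k) = L ^ n * norm (x (k + n))"
      by (simp add: wshift_iter norm_mult norm_power L_def)
    thus ?thesis using r(1) r(2)[of k] by linarith
  qed
  obtain \<delta> where d0: "0 < ereal \<delta>" and d1: "ereal \<delta> < lower_density B"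
    using ereal_dense2[OF ldB] by blast
  have "eventually (\<lambda>N. ereal (real (card {n. n \<le> N \<and> n \<in> B}) / real (N + 1)) > ereal \<delta>) sequentially"
    using d1 unfolding lower_density_def by (rule less_LiminfD)
  then obtain N0 where N0: "\<And>N. N \<ge> N0 \<Longrightarrow> real (card {n. n \<le> N \<and> n \<in> B}) / real (N + 1) > \<delta>"
    by (auto simp: eventually_sequentially)
  have dpos: "\<delta> > 0" using d0 by simp
  have gap: "\<exists>n\<in>B. n \<le> j \<and> real n > \<delta> * real (j + 1) - 1" if "j \<ge> N0" for j
  proof (rule density_gap)
    show "\<delta> \<ge> 0" using dpos by simp
  next
    have "real (card {n. n \<le> j \<and> n \<in> B}) / real (j + 1) > \<delta>" using N0[OF that] .
    thus "real (card {n. n \<le> j \<and> n \<in> B}) > \<delta> * real (j + 1)"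
      by (simp add: field_simps)
  qed
  define M where "M = nat \<lceil>1 / \<delta>\<rceil> + 1"
  show ?thesis
  proof (intro exI allI impI)
    fix m assume mM: "m \<ge> M"
    have md: "real m * \<delta> \<ge> 1"
    proof -
      have "real m \<ge> 1 / \<delta>" using mM unfolding M_def by linarith
      hence "real m * \<delta> \<ge> (1 / \<delta>) * \<delta>" using dpos by (intro mult_right_mono) auto
      thus ?thesis using dpos by simp
    qed
    define z where "z = (\<lambda>n. x n ^ m)"
    define K where "K = L ^ m + (\<Sum>j<N0. norm (l ^ j * z j))"
    have Kb: "norm (l ^ j * z j) \<le> K" for j
    proof (cases "j < N0")
      case True
      hence "norm (l ^ j * z j) \<le> (\<Sum>j<N0. norm (l ^ j * z j))"
        by (intro member_le_sum) auto
      moreover have "0 \<le> L ^ m" using L1 by simp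
      ultimately show ?thesis by (simp add: K_def)
    next
      case False
      then obtain n where nB: "n \<in> B" and nj: "n \<le> j" and nr: "real n > \<delta> * real (j + 1) - 1"
        using gap[of j] by auto
      have b1: "L ^ n * norm (x j) < 1" using Bbound[OF nB, of "j - n"] nj by simp
      have b2: "(L ^ n * norm (x j)) ^ m \<le> 1"
        using b1 L1 by (intro power_le_one) auto
      have "real m * (real n + 1) > real m * (\<delta> * real (j + 1))"
        using nr md mM by (intro mult_strict_left_mono) (auto simp: M_def)
      moreover have "real m * (\<delta> * real (j + 1)) \<ge> real (j + 1)"
      proof -
        have "real m * (\<delta> * real (j + 1)) = (real m * \<delta>) * real (j + 1)" by simp
        also have "\<dots> \<ge> 1 * real (j + 1)" using md by (intro mult_right_mono) auto
        finally show ?thesis by simp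
      qed
      ultimately have "real j \<le> real m * real n + real m" by (simp add: algebra_simps)
      hence "real j \<le> real (n * m + m)" by (simp add: mult.commute)
      hence jle: "j \<le> n * m + m" by linarith
      have "norm (l ^ j * z j) = L ^ j * norm (x j) ^ m"
        by (simp add: z_def L_def norm_mult norm_power)
      also have "\<dots> \<le> L ^ (n * m + m) * norm (x j) ^ m"
        using L1 jle by (intro mult_right_mono power_increasing) auto
      also have "\<dots> = L ^ m * (L ^ n * norm (x j)) ^ m"
        unfolding power_add power_mult power_mult_distrib by (simp add: ac_simps)
      also have "\<dots> \<le> L ^ m" using mult_left_le[OF b2, of "L ^ m"] L1 by simp
      finally have "norm (l ^ j * z j) \<le> L ^ m" .
      moreover have "0 \<le> (\<Sum>j<N0. norm (l ^ j * z j))" by (intro sum_nonneg) auto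
      ultimately show ?thesis unfolding K_def by linarith
    qed
    show "\<not> hypercyclic X nrm (wshift l) (\<lambda>n. x n ^ m)"
    proof
      assume h: "hypercyclic X nrm (wshift l) (\<lambda>n. x n ^ m)"
      hence zX: "z \<in> X" by (simp add: hypercyclic_def z_def)
      define y :: "nat \<Rightarrow> complex" where "y = (\<lambda>k. if k = 0 then complex_of_real (K + 1) else 0)"
      have yX: "y \<in> X" unfolding y_def by (rule spc_single[OF s])
      obtain n where n: "nrm ((wshift l ^^ n) z - y) < 1"
        using h yX unfolding hypercyclic_def z_def by fastforce
      have wX: "(wshift l ^^ n) z - y \<in> X"
        unfolding wshift_iter by (rule spc_diff[OF s spc_shift[OF s zX] yX])
      have "norm (((wshift l ^^ n) z - y) 0) < 1"
        using spc_coord[OF s wX, of 0] n by simp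
      moreover have "((wshift l ^^ n) z - y) 0 = l ^ n * z n - complex_of_real (K + 1)"
        by (simp add: wshift_iter y_def)
      moreover have "norm (l ^ n * z n - complex_of_real (K + 1)) \<ge> 1"
      proof -
        have "norm (complex_of_real (K + 1)) \<le> norm (l ^ n * z n - complex_of_real (K + 1)) + norm (l ^ n * z n)"
          using norm_triangle_ineq2[of "complex_of_real (K + 1)" "l ^ n * z n"]
            norm_minus_commute[of "complex_of_real (K + 1)" "l ^ n * z n"] by linarith
        moreover have "K \<ge> 0" using Kb[of 0] norm_ge_zero order_trans by blast
        ultimately show ?thesis using Kb[of n] by simp
      qed
      ultimately show False by simp
    qed
  qed
qed

end
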